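(* For all $m,t\in\mathbb{N}$, \[ R_t(1,m) \leq \left(1-\frac{1}{2^t}\right)2^m-\frac{\sqrt{2^t-1}}{2^t}\,2^{m/2}. \]
   Context: For a $t\times n$ matrix $\mathbf{v}$ over $\mathbb{F}_2$ with rows $\overline{v}_1,\dots,\overline{v}_t$, $\mathrm{wt}^{(t)}(\mathbf{v})=\left|\bigcup_{i} \mathrm{supp}(\overline{v}_i)\right|$ and $d^{(t)}(\mathbf{u},\mathbf{v})=\mathrm{wt}^{(t)}(\mathbf{u}-\mathbf{v})$. For a linear code $C\subseteq\mathbb{F}_2^n$, $C^t$ is the set of $t\times n$ matrices all of whose rows lie in $C$, and $R_t(C)$ is the smallest integer $\rho$ such that for every $\mathbf{v}\in\mathbb{F}_2^{t\times n}$ some $\mathbf{c}\in C^t$ has $d^{(t)}(\mathbf{v},\mathbf{c})\le\rho$. $\mathrm{RM}(1,m)$ is the first-order binary Reed–Muller code of length $2^m$ (evaluations of all affine functions $\mathbb{F}_2^m\to\mathbb{F}_2$; dimension $m+1$), with $\mathrm{RM}(1,1)=\mathbb{F}_2^2$. $R_t(1,m)=R_t(\mathrm{RM}(1,m))$. *)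

theory Defs
  imports Complex_Main
begin

text \<open>Binary words of length n are modelled as maps from a finite coordinate set P
  (with card P = n) to bool (= F_2).  A t x n matrix is a map nat => P => bool,
  with rows indexed by i < t.  Subtraction in F_2 is exclusive or.\<close>

definition wt_t :: "nat \<Rightarrow> 'p set \<Rightarrow> (nat \<Rightarrow> 'p \<Rightarrow> bool) \<Rightarrow> nat" where
  "wt_t t P v = card {p \<in> P. \<exists>i<t. v i p}"

definition dist_t :: "nat \<Rightarrow> 'p set \<Rightarrow> (nat \<Rightarrow> 'p \<Rightarrow> bool) \<Rightarrow> (nat \<Rightarrow> 'p \<Rightarrow> bool) \<Rightarrow> nat" where
  "dist_t t P u v = wt_t t P (\<lambda>i p. u i p \<noteq> v i p)"

definition code_pow :: "('p \<Rightarrow> bool) set \<Rightarrow> nat \<Rightarrow> (nat \<Rightarrow> 'p \<Rightarrow> bool) set" where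
  "code_pow C t = {c. \<forall>i<t. c i \<in> C}"

definition cov_radius_t :: "nat \<Rightarrow> 'p set \<Rightarrow> ('p \<Rightarrow> bool) set \<Rightarrow> nat" where
  "cov_radius_t t P C = (LEAST \<rho>. \<forall>v. \<exists>c\<in>code_pow C t. dist_t t P v c \<le> \<rho>)"

text \<open>Coordinates of RM(1,m): points of F_2^m, as bool lists of length m.\<close>
definition RM_pts :: "nat \<Rightarrow> bool list set" where
  "RM_pts m = {xs. length xs = m}"

text \<open>Evaluations of affine functions x |-> b + sum_{i<m} a_i x_i over F_2.\<close>
definition RM1 :: "nat \<Rightarrow> (bool list \<Rightarrow> bool) set" where
  "RM1 m = {f. \<exists>(b::bool) (a::nat \<Rightarrow> bool).
     f = (\<lambda>x. odd ((if b then 1 else 0) + card {i. i < m \<and> a i \<and> x ! i}))}"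

definition R_t_RM :: "nat \<Rightarrow> nat \<Rightarrow> nat" where
  "R_t_RM t m = cov_radius_t t (RM_pts m) (RM1 m)"

end

theory Submission
  imports Defs
begin

definition ip :: "nat \<Rightarrow> bool list \<Rightarrow> bool list \<Rightarrow> bool" where
  "ip m a x = odd (card {i. i < m \<and> a ! i \<and> x ! i})"

definition sg :: "bool \<Rightarrow> real" where
  "sg b = (if b then -1 else 1)"

lemma sg_neq: "sg (u \<noteq> w) = sg u * sg w"
  by (simp add: sg_def)

lemma sg_eq_not: "sg (u = (\<not> w)) = sg u * sg w"
  by (simp add: sg_def)

lemma sg_sq: "sg u * sg u = 1"
  by (simp add: sg_def)

lemma card_less_Suc_split:
  "card {i. i < Suc m \<and> P i} = (if P 0 then 1 else 0) + card {i. i < m \<and> P (Suc i)}"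
proof -
  have e: "{i. i < Suc m \<and> P i} = (if P 0 then {0} else {}) \<union> Suc ` {i. i < m \<and> P (Suc i)}"
    by (auto simp: less_Suc_eq_0_disj)
  show ?thesis
    unfolding e by (simp add: card_image)
qed

lemma ip_Cons: "ip (Suc m) (b # a) (y # x) = ((b \<and> y) \<noteq> ip m a x)"
  unfolding ip_def by (subst card_less_Suc_split) auto

lemma RM_pts_0: "RM_pts 0 = {[]}"
  by (auto simp: RM_pts_def)

lemma RM_pts_Suc: "RM_pts (Suc m) = Cons True ` RM_pts m \<union> Cons False ` RM_pts m"
  by (auto simp: RM_pts_def length_Suc_conv)

lemma finite_RM_pts: "finite (RM_pts m)"
  by (induction m) (auto simp: RM_pts_0 RM_pts_Suc)

lemma card_RM_pts: "card (RM_pts m) = 2 ^ m"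
proof -
  have "RM_pts m = {xs. set xs \<subseteq> UNIV \<and> length xs = m}" by (auto simp: RM_pts_def)
  moreover have "card {xs. set xs \<subseteq> (UNIV::bool set) \<and> length xs = m} = 2 ^ m"
    using card_lists_length_eq[of "UNIV::bool set" m] by simp
  ultimately show ?thesis by simp
qed

lemma orth:
  "length p = m \<Longrightarrow> length q = m \<Longrightarrow>
   (\<Sum>a\<in>RM_pts m. sg (ip m a p) * sg (ip m a q)) = (if p = q then 2 ^ m else 0)"
proof (induction m arbitrary: p q)
  case 0
  then show ?case by (simp add: RM_pts_0 ip_def sg_def)
next
  case (Suc m)
  obtain x p' where p: "p = x # p'" "length p' = m" using Suc.prems by (cases p) auto
  obtain y q' where q: "q = y # q'" "length q' = m" using Suc.prems by (cases q) auto
  let ?S = "\<Sum>a\<in>RM_pts m. sg (ip m a p') * sg (ip m a q')"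
  have d: "Cons True ` RM_pts m \<inter> Cons False ` RM_pts m = {}" by auto
  have "(\<Sum>a\<in>RM_pts (Suc m). sg (ip (Suc m) a p) * sg (ip (Suc m) a q))
      = (\<Sum>a\<in>RM_pts m. sg (ip (Suc m) (True # a) p) * sg (ip (Suc m) (True # a) q))
      + (\<Sum>a\<in>RM_pts m. sg (ip (Suc m) (False # a) p) * sg (ip (Suc m) (False # a) q))"
    unfolding RM_pts_Suc
    by (simp add: sum.union_disjoint[OF _ _ d] finite_RM_pts sum.reindex)
  also have "\<dots> = sg x * sg y * ?S + ?S"
    by (simp add: p q ip_Cons sg_neq sg_eq_not sum_distrib_left mult_ac)
  also have "\<dots> = (sg x * sg y + 1) * ?S"
    by (simp add: distrib_right)
  also have "\<dots> = (if p = q then 2 ^ Suc m else 0)"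
    using Suc.IH[OF p(2) q(2)] by (auto simp: p q sg_def)
  finally show ?case .
qed

lemma parseval:
  assumes A: "A \<subseteq> RM_pts m"
  shows "(\<Sum>a\<in>RM_pts m. (\<Sum>p\<in>A. sg (f p) * sg (ip m a p))^2) = 2 ^ m * real (card A)"
proof -
  have fA: "finite A" using A finite_RM_pts finite_subset by blast
  have "(\<Sum>a\<in>RM_pts m. (\<Sum>p\<in>A. sg (f p) * sg (ip m a p))^2)
     = (\<Sum>a\<in>RM_pts m. \<Sum>p\<in>A. \<Sum>q\<in>A. sg (f p) * sg (f q) * (sg (ip m a p) * sg (ip m a q)))"
    by (simp add: power2_eq_square sum_product mult_ac)
  also have "\<dots> = (\<Sum>p\<in>A. \<Sum>q\<in>A. sg (f p) * sg (f q) * (\<Sum>a\<in>RM_pts m. sg (ip m a p) * sg (ip m a q)))"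
    by (simp add: sum.swap[of _ "RM_pts m"] sum_distrib_left)
  also have "\<dots> = (\<Sum>p\<in>A. \<Sum>q\<in>A. sg (f p) * sg (f q) * (if p = q then 2 ^ m else 0))"
  proof (intro sum.cong refl)
    fix p q assume "p \<in> A" "q \<in> A"
    show "sg (f p) * sg (f q) * (\<Sum>a\<in>RM_pts m. sg (ip m a p) * sg (ip m a q)) =
         sg (f p) * sg (f q) * (if p = q then 2 ^ m else 0)"
    proof -
      have "length p = m" "length q = m" using A \<open>p \<in> A\<close> \<open>q \<in> A\<close> by (auto simp: RM_pts_def)
      then show ?thesis by (simp only: orth)
    qed
  qed
  also have "\<dots> = (\<Sum>p\<in>A. 2 ^ m)"
    by (simp add: fA sg_sq if_distrib cong: if_cong)
  also have "\<dots> = 2 ^ m * real (card A)" by simp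
  finally show ?thesis .
qed

lemma key:
  assumes A: "A \<subseteq> RM_pts m"
  shows "\<exists>a\<in>RM_pts m. \<exists>b. real (card {p\<in>A. (b \<noteq> ip m a p) = f p}) \<ge> (card A + sqrt (card A)) / 2"
proof -
  have fA: "finite A" using A finite_RM_pts finite_subset by blast
  define W where "W a = (\<Sum>p\<in>A. sg (f p) * sg (ip m a p))" for a
  have "\<exists>a\<in>RM_pts m. (W a)^2 \<ge> real (card A)"
  proof (rule ccontr)
    assume "\<not> ?thesis"
    then have lt: "\<And>a. a \<in> RM_pts m \<Longrightarrow> (W a)^2 < real (card A)" by auto
    have ne: "RM_pts m \<noteq> {}" using card_RM_pts[of m] by auto
    have "(\<Sum>a\<in>RM_pts m. (W a)^2) < (\<Sum>a\<in>RM_pts m. real (card A))"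
      by (rule sum_strict_mono[OF finite_RM_pts ne lt])
    also have "\<dots> = 2 ^ m * real (card A)" by (simp add: card_RM_pts)
    finally show False using parseval[OF A, of f] unfolding W_def by simp
  qed
  then obtain a where a: "a \<in> RM_pts m" "(W a)^2 \<ge> real (card A)" by blast
  have sq: "sqrt (card A) \<le> \<bar>W a\<bar>"
    using a(2) real_sqrt_le_mono[of "real (card A)" "(W a)^2"] by simp
  define X where "X = card {p\<in>A. ip m a p = f p}"
  define Y where "Y = card {p\<in>A. ip m a p \<noteq> f p}"
  have XY: "X + Y = card A"
  proof -
    have "{p\<in>A. ip m a p = f p} \<union> {p\<in>A. ip m a p \<noteq> f p} = A" by auto
    moreover have "{p\<in>A. ip m a p = f p} \<inter> {p\<in>A. ip m a p \<noteq> f p} = {}" by auto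
    ultimately show ?thesis unfolding X_def Y_def
      by (metis (no_types, lifting) card_Un_disjoint fA finite_Un)
  qed
  have WXY: "W a = real X - real Y"
  proof -
    have "W a = (\<Sum>p\<in>A. if ip m a p = f p then 1 else -1)"
      unfolding W_def by (intro sum.cong refl) (auto simp: sg_def)
    also have "\<dots> = real X - real Y"
      by (simp add: sum.If_cases fA X_def Y_def Int_def Collect_conj_eq[symmetric] conj_commute)
    finally show ?thesis .
  qed
  show ?thesis
  proof (cases "W a \<ge> 0")
    case True
    have "{p\<in>A. (False \<noteq> ip m a p) = f p} = {p\<in>A. ip m a p = f p}" by auto
    then have "real (card {p\<in>A. (False \<noteq> ip m a p) = f p}) \<ge> (card A + sqrt (card A)) / 2"
      using True sq WXY XY unfolding X_def by auto
    then show ?thesis using a(1) by blast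
  next
    case False
    have "{p\<in>A. (True \<noteq> ip m a p) = f p} = {p\<in>A. ip m a p \<noteq> f p}" by auto
    then have "real (card {p\<in>A. (True \<noteq> ip m a p) = f p}) \<ge> (card A + sqrt (card A)) / 2"
      using False sq WXY XY unfolding Y_def by auto
    then show ?thesis using a(1) by blast
  qed
qed


lemma aff_in: "(\<lambda>x. b \<noteq> ip m a x) \<in> RM1 m"
  unfolding RM1_def ip_def
  by (rule CollectI, rule exI[of _ b], rule exI[of _ "\<lambda>i. a ! i"]) (auto simp: fun_eq_iff)

lemma step_ineq:
  fixes K n g G :: real
  assumes K: "K \<ge> 1" and n: "n \<ge> 0"
    and g: "g \<ge> (n + sqrt ((K - 1) * n)) / K"
    and G: "G \<ge> (g + sqrt g) / 2"
  shows "G \<ge> (n + sqrt ((2 * K - 1) * n)) / (2 * K)"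
proof -
  have s1: "sqrt ((K - 1) * n) \<ge> 0" using K n by simp
  have "n / K \<le> (n + sqrt ((K - 1) * n)) / K" using s1 K by (simp add: divide_right_mono)
  then have gK: "g \<ge> n / K" using g by linarith
  have "sqrt g \<ge> sqrt (n / K)" using gK by simp
  moreover have "K * sqrt (n / K) = sqrt (K * n)"
  proof -
    have "K * sqrt (n / K) = sqrt (K^2) * sqrt (n / K)" using K by simp
    also have "\<dots> = sqrt (K^2 * (n / K))" by (simp only: real_sqrt_mult)
    also have "K^2 * (n / K) = K * n" using K by (simp add: power2_eq_square)
    finally show ?thesis .
  qed
  ultimately have Ks: "K * sqrt g \<ge> sqrt (K * n)"
    using K by (metis mult_left_mono order_trans zero_le_one)
  have s2: "sqrt ((2 * K - 1) * n) \<le> sqrt ((K - 1) * n) + sqrt (K * n)"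
  proof -
    have "(sqrt ((K - 1) * n))^2 = (K - 1) * n" "(sqrt (K * n))^2 = K * n" using K n by simp_all
    then have "(2 * K - 1) * n = (sqrt ((K - 1) * n))^2 + (sqrt (K * n))^2" by (simp add: algebra_simps)
    also have "\<dots> \<le> (sqrt ((K - 1) * n) + sqrt (K * n))^2"
      using K n by (simp add: power2_sum)
    finally show ?thesis using K n by (simp add: real_le_lsqrt)
  qed
  have "(n + sqrt ((2 * K - 1) * n)) / (2 * K) \<le> (n + sqrt ((K - 1) * n) + K * sqrt g) / (2 * K)"
    using s2 Ks K by (simp add: divide_right_mono)
  also have "\<dots> = ((n + sqrt ((K - 1) * n)) / K + sqrt g) / 2"
    using K by (simp add: field_simps)
  also have "\<dots> \<le> (g + sqrt g) / 2" using g by (intro divide_right_mono add_right_mono) auto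
  finally show ?thesis using G by (rule order_trans)
qed

lemma main:
  "\<exists>c. (\<forall>i<t. c i \<in> RM1 m) \<and>
     real (card {p\<in>RM_pts m. \<forall>i<t. c i p = v i p}) \<ge> (2 ^ m + sqrt ((2 ^ t - 1) * 2 ^ m)) / 2 ^ t"
proof (induction t)
  case 0
  show ?case by (rule exI[of _ "\<lambda>_. v 0"]) (simp add: card_RM_pts)
next
  case (Suc t)
  then obtain c where c: "\<forall>i<t. c i \<in> RM1 m"
    and cA: "real (card {p\<in>RM_pts m. \<forall>i<t. c i p = v i p}) \<ge> (2 ^ m + sqrt ((2 ^ t - 1) * 2 ^ m)) / 2 ^ t"
    by blast
  define A where "A = {p\<in>RM_pts m. \<forall>i<t. c i p = v i p}"
  have AS: "A \<subseteq> RM_pts m" unfolding A_def by auto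
  obtain a b where ab: "real (card {p\<in>A. (b \<noteq> ip m a p) = v t p}) \<ge> (card A + sqrt (card A)) / 2"
    using key[OF AS, of "v t"] by blast
  define c' where "c' = c(t := (\<lambda>x. b \<noteq> ip m a x))"
  have c'1: "\<forall>i<Suc t. c' i \<in> RM1 m" using c aff_in unfolding c'_def by (auto simp: less_Suc_eq)
  have eq: "{p\<in>RM_pts m. \<forall>i<Suc t. c' i p = v i p} = {p\<in>A. (b \<noteq> ip m a p) = v t p}"
    unfolding A_def c'_def by (auto simp: less_Suc_eq)
  have "real (card {p\<in>RM_pts m. \<forall>i<Suc t. c' i p = v i p}) \<ge> (2 ^ m + sqrt ((2 * 2 ^ t - 1) * 2 ^ m)) / (2 * 2 ^ t)"
    unfolding eq
    by (rule step_ineq[OF _ _ cA[folded A_def] ab]) auto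
  then show ?case using c'1 by auto
qed

theorem lemma10:
  fixes m t :: nat
  shows "real (R_t_RM t m) \<le> (1 - 1 / 2 ^ t) * 2 ^ m
            - sqrt (2 ^ t - 1) / 2 ^ t * 2 powr (real m / 2)"
proof -
  define B :: real where "B = (1 - 1 / 2 ^ t) * 2 ^ m - sqrt (2 ^ t - 1) / 2 ^ t * 2 powr (real m / 2)"
  have B: "B = 2 ^ m - (2 ^ m + sqrt ((2 ^ t - 1) * 2 ^ m)) / 2 ^ t"
  proof -
    have h: "2 powr (real m / 2) = sqrt (2 ^ m)" by (simp add: powr_half_sqrt_powr powr_realpow)
    have h2: "sqrt ((2 ^ t - 1) * 2 ^ m) = sqrt (2 ^ t - 1) * sqrt (2 ^ m)" by (rule real_sqrt_mult)
    show ?thesis unfolding B_def h h2 by (simp add: field_simps)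
  qed
  have all: "\<forall>v. \<exists>c\<in>code_pow (RM1 m) t. real (dist_t t (RM_pts m) v c) \<le> B"
  proof
    fix v :: "nat \<Rightarrow> bool list \<Rightarrow> bool"
    obtain c where c: "\<forall>i<t. c i \<in> RM1 m"
      and cA: "real (card {p\<in>RM_pts m. \<forall>i<t. c i p = v i p}) \<ge> (2 ^ m + sqrt ((2 ^ t - 1) * 2 ^ m)) / 2 ^ t"
      using main by blast
    have "{p \<in> RM_pts m. \<exists>i<t. v i p \<noteq> c i p} = RM_pts m - {p\<in>RM_pts m. \<forall>i<t. c i p = v i p}"
      by auto
    then have "dist_t t (RM_pts m) v c = card (RM_pts m) - card {p\<in>RM_pts m. \<forall>i<t. c i p = v i p}"
      unfolding dist_t_def wt_t_def by (simp add: card_Diff_subset finite_RM_pts)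
    moreover have "card {p\<in>RM_pts m. \<forall>i<t. c i p = v i p} \<le> card (RM_pts m)"
      by (rule card_mono[OF finite_RM_pts]) auto
    ultimately have "real (dist_t t (RM_pts m) v c) = 2 ^ m - real (card {p\<in>RM_pts m. \<forall>i<t. c i p = v i p})"
      by (simp add: card_RM_pts of_nat_diff)
    then have "real (dist_t t (RM_pts m) v c) \<le> B" using cA B by linarith
    moreover have "c \<in> code_pow (RM1 m) t" using c by (simp add: code_pow_def)
    ultimately show "\<exists>c\<in>code_pow (RM1 m) t. real (dist_t t (RM_pts m) v c) \<le> B" by blast
  qed
  have B0: "B \<ge> 0"
  proof -
    obtain c where "real (dist_t t (RM_pts m) (\<lambda>_ _. False) c) \<le> B"
      using all by blast
    then show ?thesis by (meson of_nat_0_le_iff order_trans)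
  qed
  have "\<forall>v. \<exists>c\<in>code_pow (RM1 m) t. dist_t t (RM_pts m) v c \<le> nat \<lfloor>B\<rfloor>"
    using all by (meson le_nat_floor)
  then have R: "R_t_RM t m \<le> nat \<lfloor>B\<rfloor>"
    unfolding R_t_RM_def cov_radius_t_def by (rule Least_le)
  have "real (nat \<lfloor>B\<rfloor>) \<le> B" using B0 by linarith
  then show ?thesis using R unfolding B_def[symmetric]
    by (meson of_nat_le_iff order_trans)
qed

end
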